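(* Let $k^0_{rw},k^0_{rg},\mu_w,\mu_g,f_{mmob},\mathrm{epdry}>0$, let $n_w,n_g\ge 2$, $S_{wc},S_{gr}\ge0$ with $S_{wc}+S_{gr}<1$, $\mathrm{fmdry}\in\mathbb{R}$, and take $\mathrm{fmsurf}=C_{\max}$ and $\mathrm{epsurf}=1$. For $(S,C)\in[0,1]^2$ define $S_w=S_{wc}+S(1-S_{wc}-S_{gr})$, $$k_{rw}(S)=k^0_{rw}S^{n_w},\quad k_{rg}(S)=k^0_{rg}(1-S)^{n_g},\quad F_2(S)=\tfrac12+\tfrac1\pi\arctan\big(\mathrm{epdry}(S_w-\mathrm{fmdry})\big),$$ $$k^f_{rg}(S,C)=\frac{k_{rg}(S)}{1+f_{mmob}\,C\,F_2(S)},\qquad f(S,C)=\frac{k_{rw}(S)}{k_{rw}(S)+(\mu_w/\mu_g)\,k^f_{rg}(S,C)}.$$ Then $f\in\mathscr{C}^2([0,1]^2)$, $f(0,C)=0$, $f(1,C)=1$ and $\partial_Sf(0,C)=\partial_Sf(1,C)=0$ for every $C\in[0,1]$; moreover $\partial_Sf(S,C)>0$ and $\partial_Cf(S,C)>0$ for all $S\in(0,1)$, $C\in[0,1]$.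
   Context: This is the (normalized) water fractional flow function of the CMG-STARS local-equilibrium foam model: $S$ is normalized water saturation, $C=C_s^w/C_{\max}$ normalized surfactant concentration; with $\mathrm{fmsurf}=C_{\max}$, $\mathrm{epsurf}=1$ the surfactant factor $F_1$ equals $C$ on $[0,1]$, and the foam mobility reduction factor is $FM=(1+f_{mmob}F_1F_2)^{-1}$. *)

theory Defs
  imports "HOL-Analysis.Analysis"
begin

definition unit_square :: "(real \<times> real) set" where
  "unit_square = {0..1} \<times> {0..1}"

definition has_partials_on ::
  "(real \<times> real \<Rightarrow> real) \<Rightarrow> (real \<times> real \<Rightarrow> real) \<Rightarrow> (real \<times> real \<Rightarrow> real)
     \<Rightarrow> (real \<times> real) set \<Rightarrow> bool" where
  "has_partials_on g gS gC K \<longleftrightarrow>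
     (\<forall>p\<in>K. (g has_derivative (\<lambda>h. gS p * fst h + gC p * snd h)) (at p within K))"

definition C1_on :: "(real \<times> real \<Rightarrow> real) \<Rightarrow> (real \<times> real) set \<Rightarrow> bool" where
  "C1_on g K \<longleftrightarrow> (\<exists>gS gC. has_partials_on g gS gC K \<and> continuous_on K gS \<and> continuous_on K gC)"

definition C2_on :: "(real \<times> real \<Rightarrow> real) \<Rightarrow> (real \<times> real) set \<Rightarrow> bool" where
  "C2_on g K \<longleftrightarrow> (\<exists>gS gC. has_partials_on g gS gC K \<and> C1_on gS K \<and> C1_on gC K)"

text \<open>Fractional flow of the CMG-STARS foam model with fmsurf = Cmax, epsurf = 1,
  so that F1 = C on [0,1].\<close>
definition frac_flow ::
  "real \<Rightarrow> real \<Rightarrow> real \<Rightarrow> real \<Rightarrow> real \<Rightarrow> real \<Rightarrow> real \<Rightarrow> real \<Rightarrow> real \<Rightarrow> real \<Rightarrow> real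
     \<Rightarrow> real \<times> real \<Rightarrow> real" where
  "frac_flow krw0 krg0 muw mug fmmob epdry nw ng Swc Sgr fmdry p =
     (let S = fst p; C = snd p;
          Sw = Swc + S * (1 - Swc - Sgr);
          krw = krw0 * S powr nw;
          krg = krg0 * (1 - S) powr ng;
          F2 = 1/2 + (1/pi) * arctan (epdry * (Sw - fmdry));
          krgf = krg / (1 + fmmob * C * F2)
      in krw / (krw + (muw / mug) * krgf))"

end

theory Submission imports Defs begin


lemma hp_intro:
  assumes "\<And>p. p \<in> K \<Longrightarrow> (g has_derivative (\<lambda>h. gS p * fst h + gC p * snd h)) (at p within K)"
  shows "has_partials_on g gS gC K"
  using assms unfolding has_partials_on_def by blast

lemma hp_D: "has_partials_on g gS gC K \<Longrightarrow> p \<in> K \<Longrightarrow> (g has_derivative (\<lambda>h. gS p * fst h + gC p * snd h)) (at p within K)"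
  unfolding has_partials_on_def by blast

lemma hp_const: "has_partials_on (\<lambda>p. c) (\<lambda>p. 0) (\<lambda>p. 0) K"
  by (rule hp_intro, rule has_derivative_eq_rhs[OF has_derivative_const]) auto

lemma hp_fst: "has_partials_on (\<lambda>p. fst p) (\<lambda>p. 1) (\<lambda>p. 0) K"
  by (rule hp_intro, rule has_derivative_eq_rhs[OF has_derivative_fst[OF has_derivative_ident]]) auto

lemma hp_snd: "has_partials_on (\<lambda>p. snd p) (\<lambda>p. 0) (\<lambda>p. 1) K"
  by (rule hp_intro, rule has_derivative_eq_rhs[OF has_derivative_snd[OF has_derivative_ident]]) auto

lemma hp_add: assumes "has_partials_on g gS gC K" "has_partials_on h hS hC K" shows
  "has_partials_on (\<lambda>p. g p + h p) (\<lambda>p. gS p + hS p) (\<lambda>p. gC p + hC p) K"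
  by (rule hp_intro, rule has_derivative_eq_rhs[OF has_derivative_add[OF hp_D[OF assms(1)] hp_D[OF assms(2)]]])
     (auto simp: algebra_simps)

lemma hp_mult: assumes "has_partials_on g gS gC K" "has_partials_on h hS hC K" shows
  "has_partials_on (\<lambda>p. g p * h p) (\<lambda>p. gS p * h p + g p * hS p) (\<lambda>p. gC p * h p + g p * hC p) K"
  by (rule hp_intro, rule has_derivative_eq_rhs[OF has_derivative_mult[OF hp_D[OF assms(1)] hp_D[OF assms(2)]]])
     (auto simp: algebra_simps)

lemma hp_comp:
  assumes "has_partials_on g gS gC K" "\<And>p. p \<in> K \<Longrightarrow> (\<phi> has_real_derivative \<phi>' (g p)) (at (g p))"
  shows "has_partials_on (\<lambda>p. \<phi> (g p)) (\<lambda>p. \<phi>' (g p) * gS p) (\<lambda>p. \<phi>' (g p) * gC p) K"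
proof (rule hp_intro)
  fix p assume p: "p \<in> K"
  have "((\<lambda>p. \<phi> (g p)) has_derivative (\<lambda>h. \<phi>' (g p) * (gS p * fst h + gC p * snd h))) (at p within K)"
    using has_derivative_compose[OF hp_D[OF assms(1) p] assms(2)[OF p, unfolded has_field_derivative_def]] .
  then show "((\<lambda>p. \<phi> (g p)) has_derivative (\<lambda>h. \<phi>' (g p) * gS p * fst h + \<phi>' (g p) * gC p * snd h)) (at p within K)"
    by (rule has_derivative_eq_rhs) (auto simp: algebra_simps)
qed

lemma hp_fstfun:
  assumes "fst ` K \<subseteq> I" "\<And>x. x \<in> I \<Longrightarrow> (\<phi> has_real_derivative \<phi>' x) (at x within I)"
  shows "has_partials_on (\<lambda>p. \<phi> (fst p)) (\<lambda>p. \<phi>' (fst p)) (\<lambda>p. 0) K"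
proof (rule hp_intro)
  fix p assume p: "p \<in> K"
  have "((\<lambda>p. \<phi> (fst p)) has_derivative (\<lambda>h. (\<lambda>x. (*) (\<phi>' x)) (fst p) (fst h))) (at p within K)"
    by (rule has_derivative_in_compose2[where t=I]) 
       (use assms p in \<open>auto simp: has_field_derivative_def intro: has_derivative_fst[OF has_derivative_ident]\<close>)
  then show "((\<lambda>p. \<phi> (fst p)) has_derivative (\<lambda>h. \<phi>' (fst p) * fst h + 0 * snd h)) (at p within K)"
    by (rule has_derivative_eq_rhs) auto
qed

lemma hp_cont: "has_partials_on g gS gC K \<Longrightarrow> continuous_on K g"
  unfolding continuous_on_eq_continuous_within
  by (auto dest: hp_D has_derivative_continuous)

lemma c1_cont: "C1_on g K \<Longrightarrow> continuous_on K g"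
  unfolding C1_on_def by (auto intro: hp_cont)

lemma c1_const: "C1_on (\<lambda>p. c) K"
  unfolding C1_on_def by (intro exI conjI, rule hp_const) auto

lemma c1_fst: "C1_on (\<lambda>p. fst p) K"
  unfolding C1_on_def by (intro exI conjI, rule hp_fst) auto

lemma c1_snd: "C1_on (\<lambda>p. snd p) K"
  unfolding C1_on_def by (intro exI conjI, rule hp_snd) auto

lemma c1_add: assumes "C1_on g K" "C1_on h K" shows "C1_on (\<lambda>p. g p + h p) K"
proof -
  obtain gS gC where g: "has_partials_on g gS gC K" "continuous_on K gS" "continuous_on K gC"
    using assms(1) unfolding C1_on_def by blast
  obtain hS hC where h: "has_partials_on h hS hC K" "continuous_on K hS" "continuous_on K hC"
    using assms(2) unfolding C1_on_def by blast
  show ?thesis unfolding C1_on_def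
    by (rule exI[of _ "\<lambda>p. gS p + hS p"], rule exI[of _ "\<lambda>p. gC p + hC p"])
       (use g h in \<open>auto intro!: hp_add continuous_intros\<close>)
qed

lemma c1_mult: assumes "C1_on g K" "C1_on h K" shows "C1_on (\<lambda>p. g p * h p) K"
proof -
  have cg: "continuous_on K g" and ch: "continuous_on K h" using assms by (auto intro: c1_cont)
  obtain gS gC where g: "has_partials_on g gS gC K" "continuous_on K gS" "continuous_on K gC"
    using assms(1) unfolding C1_on_def by blast
  obtain hS hC where h: "has_partials_on h hS hC K" "continuous_on K hS" "continuous_on K hC"
    using assms(2) unfolding C1_on_def by blast
  show ?thesis unfolding C1_on_def
    by (rule exI[of _ "\<lambda>p. gS p * h p + g p * hS p"], rule exI[of _ "\<lambda>p. gC p * h p + g p * hC p"])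
       (use g h cg ch in \<open>auto intro!: hp_mult continuous_intros\<close>)
qed

lemma c1_comp:
  assumes "C1_on g K" "g ` K \<subseteq> T" "\<And>y. y \<in> T \<Longrightarrow> (\<phi> has_real_derivative \<phi>' y) (at y)"
    "continuous_on T \<phi>'"
  shows "C1_on (\<lambda>p. \<phi> (g p)) K"
proof -
  have cg: "continuous_on K g" using assms(1) by (rule c1_cont)
  have c: "continuous_on K (\<lambda>p. \<phi>' (g p))"
    by (rule continuous_on_compose2[OF assms(4) cg assms(2)])
  from assms(1) obtain gS gC where g: "has_partials_on g gS gC K" "continuous_on K gS" "continuous_on K gC"
    unfolding C1_on_def by blast
  have "has_partials_on (\<lambda>p. \<phi> (g p)) (\<lambda>p. \<phi>' (g p) * gS p) (\<lambda>p. \<phi>' (g p) * gC p) K"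
    by (rule hp_comp[OF g(1)]) (use assms(2,3) in blast)
  then show ?thesis unfolding C1_on_def
    using g c by (auto intro!: continuous_intros)
qed

lemma c1_fstfun:
  assumes "fst ` K \<subseteq> I" "\<And>x. x \<in> I \<Longrightarrow> (\<phi> has_real_derivative \<phi>' x) (at x within I)"
    "continuous_on I \<phi>'"
  shows "C1_on (\<lambda>p. \<phi> (fst p)) K"
proof -
  have c: "continuous_on K (\<lambda>p. \<phi>' (fst p))"
    by (rule continuous_on_compose2[OF assms(3) continuous_on_fst[OF continuous_on_id] assms(1)])
  have "has_partials_on (\<lambda>p. \<phi> (fst p)) (\<lambda>p. \<phi>' (fst p)) (\<lambda>p. 0) K"
    by (rule hp_fstfun[OF assms(1,2)])
  then show ?thesis unfolding C1_on_def using c by (auto intro!: continuous_intros)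
qed

lemma c2_c1: assumes "C2_on g K" shows "C1_on g K"
proof -
  obtain gS gC where g: "has_partials_on g gS gC K" "C1_on gS K" "C1_on gC K"
    using assms unfolding C2_on_def by blast
  show ?thesis unfolding C1_on_def using g by (auto intro: c1_cont)
qed

lemma c2_const: "C2_on (\<lambda>p. c) K"
  unfolding C2_on_def using hp_const c1_const by blast

lemma c2_fst: "C2_on (\<lambda>p. fst p) K"
  unfolding C2_on_def using hp_fst c1_const by blast

lemma c2_snd: "C2_on (\<lambda>p. snd p) K"
  unfolding C2_on_def using hp_snd c1_const by blast

lemma c2_add: assumes "C2_on g K" "C2_on h K" shows "C2_on (\<lambda>p. g p + h p) K"
proof -
  obtain gS gC where g: "has_partials_on g gS gC K" "C1_on gS K" "C1_on gC K"
    using assms(1) unfolding C2_on_def by blast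
  obtain hS hC where h: "has_partials_on h hS hC K" "C1_on hS K" "C1_on hC K"
    using assms(2) unfolding C2_on_def by blast
  show ?thesis unfolding C2_on_def
    by (rule exI[of _ "\<lambda>p. gS p + hS p"], rule exI[of _ "\<lambda>p. gC p + hC p"])
       (use g h in \<open>auto intro!: hp_add c1_add\<close>)
qed

lemma c2_mult: assumes "C2_on g K" "C2_on h K" shows "C2_on (\<lambda>p. g p * h p) K"
proof -
  have cg: "C1_on g K" and ch: "C1_on h K" using assms by (auto intro: c2_c1)
  obtain gS gC where g: "has_partials_on g gS gC K" "C1_on gS K" "C1_on gC K"
    using assms(1) unfolding C2_on_def by blast
  obtain hS hC where h: "has_partials_on h hS hC K" "C1_on hS K" "C1_on hC K"
    using assms(2) unfolding C2_on_def by blast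
  show ?thesis unfolding C2_on_def
    by (rule exI[of _ "\<lambda>p. gS p * h p + g p * hS p"], rule exI[of _ "\<lambda>p. gC p * h p + g p * hC p"])
       (use g h cg ch in \<open>auto intro!: hp_mult c1_add c1_mult\<close>)
qed

lemma c2_comp:
  assumes "C2_on g K" "g ` K \<subseteq> T" "\<And>y. y \<in> T \<Longrightarrow> (\<phi> has_real_derivative \<phi>' y) (at y)"
    "\<And>y. y \<in> T \<Longrightarrow> (\<phi>' has_real_derivative \<phi>'' y) (at y)" "continuous_on T \<phi>''"
  shows "C2_on (\<lambda>p. \<phi> (g p)) K"
proof -
  have c1: "C1_on (\<lambda>p. \<phi>' (g p)) K"
    by (rule c1_comp[OF c2_c1[OF assms(1)] assms(2) assms(4) assms(5)])
  from assms(1) obtain gS gC where g: "has_partials_on g gS gC K" "C1_on gS K" "C1_on gC K"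
    unfolding C2_on_def by blast
  have "has_partials_on (\<lambda>p. \<phi> (g p)) (\<lambda>p. \<phi>' (g p) * gS p) (\<lambda>p. \<phi>' (g p) * gC p) K"
    by (rule hp_comp[OF g(1)]) (use assms(2,3) in blast)
  then show ?thesis unfolding C2_on_def using g c1 by (auto intro!: c1_mult)
qed

lemma c2_fstfun:
  assumes "fst ` K \<subseteq> I" "\<And>x. x \<in> I \<Longrightarrow> (\<phi> has_real_derivative \<phi>' x) (at x within I)"
    "\<And>x. x \<in> I \<Longrightarrow> (\<phi>' has_real_derivative \<phi>'' x) (at x within I)"
    "continuous_on I \<phi>''"
  shows "C2_on (\<lambda>p. \<phi> (fst p)) K"
  unfolding C2_on_def
  by (intro exI conjI, rule hp_fstfun[where \<phi>'=\<phi>', OF assms(1,2)])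
     (auto intro!: c1_const c1_fstfun[OF assms(1,3,4)])



definition Dp :: "real \<Rightarrow> real \<Rightarrow> real" where
  "Dp a x = (if a = 1 then 1 else a * x powr (a - 1))"

lemma powr_deriv01:
  assumes a: "a \<ge> 1" and x: "x \<in> {0..1}"
  shows "((\<lambda>x. x powr a) has_real_derivative Dp a x) (at x within {0..1::real})"
proof (cases "x = 0")
  case False
  then have xp: "x > 0" using x by auto
  have "((\<lambda>x. x powr a) has_real_derivative a * x powr (a - 1)) (at x)"
    by (rule has_real_derivative_powr[OF xp])
  moreover have "a * x powr (a - 1) = Dp a x" using xp by (auto simp: Dp_def)
  ultimately show ?thesis by (auto intro: has_field_derivative_at_within)
next
  case True
  have ev: "\<forall>\<^sub>F y in at 0 within {0..1::real}. (y powr a - 0 powr a) / (y - 0) = (if a = 1 then 1 else y powr (a - 1))"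
    unfolding eventually_at_filter
  proof (rule always_eventually, intro allI impI)
    fix y :: real assume "y \<noteq> 0" "y \<in> {0..1}"
    then have yp: "y > 0" by auto
    then show "(y powr a - 0 powr a) / (y - 0) = (if a = 1 then 1 else y powr (a - 1))"
      by (auto simp: powr_diff)
  qed
  have lim: "((\<lambda>y. if a = 1 then 1 else y powr (a - 1)) \<longlongrightarrow> Dp a 0) (at 0 within {0..1::real})"
  proof (cases "a = 1")
    case True then show ?thesis by (simp add: Dp_def)
  next
    case False
    then have "a - 1 > 0" using a by auto
    have "((\<lambda>y. y powr (a - 1)) \<longlongrightarrow> 0 powr (a - 1)) (at 0 within {0..1::real})"
      by (rule tendsto_powr') (use \<open>a - 1 > 0\<close> in \<open>auto simp: eventually_at_filter intro!: tendsto_ident_at\<close>)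
    then show ?thesis using False by (simp add: Dp_def)
  qed
  show ?thesis unfolding True has_field_derivative_iff
    by (rule tendsto_cong[THEN iffD2, OF ev lim])
qed

lemma Dp_cont: assumes a: "a \<ge> 1" shows "continuous_on {0..1::real} (Dp a)"
proof (cases "a = 1")
  case True then show ?thesis by (simp add: Dp_def)
next
  case False
  then have "a - 1 > 0" using a by auto
  have "continuous_on {0..1::real} (\<lambda>x. a * x powr (a - 1))"
    by (intro continuous_intros continuous_on_powr') (use \<open>a - 1 > 0\<close> in auto)
  then show ?thesis using False by (simp add: Dp_def)
qed

lemma flip_deriv:
  assumes "\<And>y. y \<in> {0..1} \<Longrightarrow> (\<psi> has_real_derivative d y) (at y within {0..1::real})"
    and x: "x \<in> {0..1}"
  shows "((\<lambda>x. \<psi> (1 - x)) has_real_derivative - d (1 - x)) (at x within {0..1})"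
proof -
  have "((\<lambda>x. \<psi> (1 - x)) has_derivative (\<lambda>h. (\<lambda>y. (*) (d y)) (1 - x) ((\<lambda>h. - h) h))) (at x within {0..1})"
    by (rule has_derivative_in_compose2[where t="{0..1}"])
       (use assms in \<open>auto simp: has_field_derivative_def intro!: derivative_eq_intros\<close>)
  then show ?thesis unfolding has_field_derivative_def
    by (rule has_derivative_eq_rhs) auto
qed



lemma c2_diff: assumes "C2_on g K" "C2_on h K" shows "C2_on (\<lambda>p. g p - h p) K"
proof -
  have "C2_on (\<lambda>p. g p + (-1) * h p) K" by (intro c2_add c2_mult assms c2_const)
  then show ?thesis by simp
qed

lemma quot_deriv:
  fixes a b d :: "real \<Rightarrow> real"
  assumes "(a has_real_derivative a') (at s within X)" "(b has_real_derivative b') (at s within X)"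
    "(d has_real_derivative d') (at s within X)" "d s \<noteq> 0" "a s + M * (b s / d s) \<noteq> 0"
  shows "((\<lambda>s. a s / (a s + M * (b s / d s))) has_real_derivative
     (a' * (a s + M * (b s / d s)) - a s * (a' + M * ((b' * d s - b s * d') / (d s * d s))))
       / ((a s + M * (b s / d s)) * (a s + M * (b s / d s)))) (at s within X)"
  by (intro DERIV_divide DERIV_add DERIV_cmult assms)

lemma key1:
  fixes a a' b b' d d' M :: real
  assumes "a \<ge> 0" "a' > 0" "b > 0" "b' \<le> 0" "d > 0" "d' \<ge> 0" "M > 0"
  shows "(a' * (a + M * (b / d)) - a * (a' + M * ((b' * d - b * d') / (d * d))))
       / ((a + M * (b / d)) * (a + M * (b / d))) > 0"
proof -
  have E: "a + M * (b / d) > 0" using assms by (auto intro!: add_nonneg_pos)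
  have n: "a' * (a + M * (b / d)) - a * (a' + M * ((b' * d - b * d') / (d * d)))
      = M * (a' * (b / d) + a * ((b * d' - b' * d) / (d * d)))"
  proof -
    have q: "(b' * d - b * d') / (d * d) = - ((b * d' - b' * d) / (d * d))"
      by (metis minus_diff_eq minus_divide_left)
    show ?thesis unfolding q by (simp add: algebra_simps)
  qed
  have t1: "a' * (b / d) > 0" using assms by auto
  have t2: "a * ((b * d' - b' * d) / (d * d)) \<ge> 0"
  proof -
    have h1: "b * d' \<ge> 0" using assms by simp
    have h2: "b' * d \<le> 0" using assms by (simp add: mult_nonpos_nonneg)
    have "b * d' - b' * d \<ge> 0" using h1 h2 by linarith
    then show ?thesis using assms by (auto intro!: mult_nonneg_nonneg divide_nonneg_pos)
  qed
  have "M * (a' * (b / d) + a * ((b * d' - b' * d) / (d * d))) > 0"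
    by (intro mult_pos_pos assms(7) add_pos_nonneg t1 t2)
  then show ?thesis unfolding n by (rule divide_pos_pos[OF _ mult_pos_pos[OF E E]])
qed

lemma key2:
  fixes a b dc k M :: real
  assumes "a > 0" "b > 0" "dc > 0" "k > 0" "M > 0"
  shows "(0 * (a + M * (b / dc)) - a * (0 + M * ((0 * dc - b * k) / (dc * dc))))
       / ((a + M * (b / dc)) * (a + M * (b / dc))) > 0"
proof -
  have E: "a + M * (b / dc) > 0" using assms by (auto intro!: add_pos_pos)
  have p: "a * (M * ((b * k) / (dc * dc))) > 0" using assms by auto
  have q: "(0 * dc - b * k) / (dc * dc) = - ((b * k) / (dc * dc))"
    by (simp add: minus_divide_left[symmetric])
  have eqn: "0 * (a + M * (b / dc)) - a * (0 + M * ((0 * dc - b * k) / (dc * dc))) = a * (M * ((b * k) / (dc * dc)))"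
    unfolding q by simp
  show ?thesis unfolding eqn by (intro divide_pos_pos p mult_pos_pos E)
qed



lemma F_pos: "0 < 1/2 + 1/pi * arctan (x::real)"
proof -
  have "-(1/2) < arctan x / pi"
    by (subst pos_less_divide_eq[OF pi_gt_zero]) (use arctan_lbound[of x] in linarith)
  then show ?thesis by simp
qed

lemma inv_d1: "y \<noteq> 0 \<Longrightarrow> (inverse has_real_derivative - (inverse y ^ 2)) (at y)"
  using DERIV_inverse[of y UNIV] by (simp add: numeral_2_eq_2)

lemma inv_d2: assumes "y \<noteq> 0" shows "((\<lambda>y. - (inverse y ^ 2)) has_real_derivative 2 * inverse y ^ 3) (at (y::real))"
proof -
  note h = DERIV_minus[OF DERIV_power[OF DERIV_inverse[OF assms, where s=UNIV], where n=2]]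
  from h show ?thesis by (rule DERIV_cong) (simp add: power3_eq_cube power2_eq_square)
qed

lemma at_d1: "(arctan has_real_derivative inverse (1 + y^2)) (at y)"
  by (rule DERIV_arctan)

lemma at_d2: "((\<lambda>y. inverse (1 + y^2)) has_real_derivative - (2 * y * inverse ((1 + y^2) ^ 2))) (at (y::real))"
proof -
  have nz: "1 + y^2 \<noteq> 0" by (smt (verit) zero_le_power2)
  have "((\<lambda>y. 1 + y^2) has_real_derivative 2 * y) (at y)" by (auto intro!: derivative_eq_intros)
  from DERIV_inverse_fun[OF this nz] show ?thesis by (simp add: numeral_2_eq_2)
qed

lemma at_c2: "continuous_on UNIV (\<lambda>y::real. - (2 * y * inverse ((1 + y^2) ^ 2)))"
proof -
  have nz: "\<And>y::real. (1 + y^2)^2 \<noteq> 0" by (smt (verit) zero_le_power2 power_eq_0_iff)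
  show ?thesis by (intro continuous_intros) (use nz in auto)
qed

lemma inv_c2: "continuous_on {y::real. y \<noteq> 0} (\<lambda>y. 2 * inverse y ^ 3)"
  by (intro continuous_intros) auto

lemma dpow1: assumes "n \<ge> 2" "x \<in> {0..1}"
  shows "((\<lambda>x. x powr n) has_real_derivative n * x powr (n-1)) (at x within {0..1})"
  using powr_deriv01[of n x] assms by (simp add: Dp_def)

lemma dpow2: assumes "n \<ge> 2" "x \<in> {0..1}"
  shows "((\<lambda>x. n * x powr (n-1)) has_real_derivative n * Dp (n-1) x) (at x within {0..1})"
  by (rule DERIV_cmult[OF powr_deriv01]) (use assms in auto)

lemma cpow2: assumes "n \<ge> 2" shows "continuous_on {0..1} (\<lambda>x. n * Dp (n-1) x)"
  by (intro continuous_on_mult_left Dp_cont) (use assms in auto)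

lemma dflip1: assumes "n \<ge> 2" "x \<in> {0..1}"
  shows "((\<lambda>x. (1-x) powr n) has_real_derivative - (n * (1-x) powr (n-1))) (at x within {0..1})"
proof -
  have "((\<lambda>x. (1-x) powr n) has_real_derivative - Dp n (1-x)) (at x within {0..1})"
    by (rule flip_deriv[where \<psi>="\<lambda>y. y powr n"], rule powr_deriv01) (use assms in auto)
  then show ?thesis using assms by (simp add: Dp_def)
qed

lemma dflip2: assumes "n \<ge> 2" "x \<in> {0..1}"
  shows "((\<lambda>x. - (n * (1-x) powr (n-1))) has_real_derivative n * Dp (n-1) (1-x)) (at x within {0..1})"
proof -
  have "((\<lambda>x. (1-x) powr (n-1)) has_real_derivative - Dp (n-1) (1-x)) (at x within {0..1})"
    by (rule flip_deriv[where \<psi>="\<lambda>y. y powr (n-1)"], rule powr_deriv01) (use assms in auto)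
  from DERIV_minus[OF DERIV_cmult[OF this, of n]] show ?thesis by simp
qed

lemma cflip2: assumes "n \<ge> 2" shows "continuous_on {0..1} (\<lambda>x. n * Dp (n-1) (1-x))"
proof -
  have "continuous_on {0..1} (\<lambda>x. Dp (n-1) (1-x))"
    by (rule continuous_on_compose2[OF Dp_cont[of "n-1"]]) (use assms in \<open>auto intro!: continuous_intros\<close>)
  then show ?thesis by (intro continuous_on_mult_left)
qed



lemma c2_div:
  assumes "C2_on g K" "C2_on h K" "h ` K \<subseteq> {y. y \<noteq> 0}"
  shows "C2_on (\<lambda>p. g p / h p) K"
proof -
  have "C2_on (\<lambda>p. g p * inverse (h p)) K"
    by (rule c2_mult[OF assms(1) c2_comp[where \<phi>=inverse and \<phi>'="\<lambda>y. - (inverse y ^ 2)" and \<phi>''="\<lambda>y. 2 * inverse y ^ 3"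
          and T="{y. y \<noteq> 0}", OF assms(2,3)]])
       (auto intro: inv_d1 inv_d2 inv_c2)
  then show ?thesis by (simp add: divide_inverse)
qed


theorem mainTheorem7:
  fixes krw0 krg0 muw mug fmmob epdry nw ng Swc Sgr fmdry :: real
  assumes "krw0 > 0" "krg0 > 0" "muw > 0" "mug > 0" "fmmob > 0" "epdry > 0"
    and "nw \<ge> 2" "ng \<ge> 2"
    and "Swc \<ge> 0" "Sgr \<ge> 0" "Swc + Sgr < 1"
  defines "f \<equiv> frac_flow krw0 krg0 muw mug fmmob epdry nw ng Swc Sgr fmdry"
  shows "C2_on f unit_square
    \<and> (\<forall>C\<in>{0..1}. f (0, C) = 0 \<and> f (1, C) = 1)
    \<and> (\<forall>C\<in>{0..1}. ((\<lambda>S. f (S, C)) has_real_derivative 0) (at 0 within {0..1})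
                 \<and> ((\<lambda>S. f (S, C)) has_real_derivative 0) (at 1 within {0..1}))
    \<and> (\<forall>S\<in>{0<..<1}. \<forall>C\<in>{0..1}.
          (\<exists>d>0. ((\<lambda>s. f (s, C)) has_real_derivative d) (at S))
        \<and> (\<exists>d>0. ((\<lambda>c. f (S, c)) has_real_derivative d) (at C within {0..1})))"
proof -
  note kp = assms(1-11)
  have M0: "muw / mug > 0" using kp by simp
  have fK: "fst ` unit_square \<subseteq> {0..1}" by (auto simp: unit_square_def)
  have mem: "0 \<le> fst p \<and> fst p \<le> 1 \<and> 0 \<le> snd p \<and> snd p \<le> 1" if "p \<in> unit_square" for p
    using that by (auto simp: unit_square_def)
  have feq: "f = (\<lambda>p. krw0 * fst p powr nw / (krw0 * fst p powr nw + muw / mug *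
     (krg0 * (1 - fst p) powr ng / (1 + fmmob * snd p * (1/2 + 1/pi * arctan (epdry * (Swc + fst p * (1 - Swc - Sgr) - fmdry)))))))"
    unfolding f_def by (rule ext) (simp only: frac_flow_def Let_def)
  have denpos: "1 + fmmob * C * (1/2 + 1/pi * arctan x) > 0" if "C \<ge> 0" for C x
  proof -
    have "fmmob * C * (1/2 + 1/pi * arctan x) \<ge> 0"
      using kp that F_pos[of x] by (intro mult_nonneg_nonneg) auto
    then show ?thesis by linarith
  qed
  have Epos: "krw0 * s powr nw + muw / mug * (krg0 * (1 - s) powr ng / (1 + fmmob * C * (1/2 + 1/pi * arctan x))) > 0"
    if "0 \<le> s" "s \<le> 1" "C \<ge> 0" for s C x
  proof -
    have dp: "1 + fmmob * C * (1/2 + 1/pi * arctan x) > 0" using denpos[OF that(3)] by simp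
    have a0: "krw0 * s powr nw \<ge> 0" using kp by simp
    have b0: "muw / mug * (krg0 * (1 - s) powr ng / (1 + fmmob * C * (1/2 + 1/pi * arctan x))) \<ge> 0"
      using kp dp M0 by (intro mult_nonneg_nonneg divide_nonneg_pos) auto
    show ?thesis
    proof (cases "s = 0")
      case True
      have "muw / mug * (krg0 * (1 - s) powr ng / (1 + fmmob * C * (1/2 + 1/pi * arctan x))) > 0"
        using kp dp M0 True by (intro mult_pos_pos divide_pos_pos) auto
      then show ?thesis using a0 by linarith
    next
      case False
      have "krw0 * s powr nw > 0" using kp False that by (intro mult_pos_pos) auto
      then show ?thesis using b0 by linarith
    qed
  qed
  have cA: "C2_on (\<lambda>p. krw0 * fst p powr nw) unit_square"
    by (rule c2_mult[OF c2_const c2_fstfun[where \<phi>="\<lambda>x. x powr nw" and \<phi>'="\<lambda>x. nw * x powr (nw-1)"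
          and \<phi>''="\<lambda>x. nw * Dp (nw-1) x" and I="{0..1}", OF fK]])
       (use kp in \<open>auto intro: dpow1 dpow2 cpow2\<close>)
  have cB: "C2_on (\<lambda>p. krg0 * (1 - fst p) powr ng) unit_square"
    by (rule c2_mult[OF c2_const c2_fstfun[where \<phi>="\<lambda>x. (1 - x) powr ng" and \<phi>'="\<lambda>x. - (ng * (1 - x) powr (ng-1))"
          and \<phi>''="\<lambda>x. ng * Dp (ng-1) (1 - x)" and I="{0..1}", OF fK]])
       (use kp in \<open>auto intro: dflip1 dflip2 cflip2\<close>)
  have cG: "C2_on (\<lambda>p. epdry * (Swc + fst p * (1 - Swc - Sgr) - fmdry)) unit_square"
    by (intro c2_mult c2_const c2_diff c2_add c2_fst)
  have cF: "C2_on (\<lambda>p. 1/2 + 1/pi * arctan (epdry * (Swc + fst p * (1 - Swc - Sgr) - fmdry))) unit_square"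
    by (rule c2_add[OF c2_const c2_mult[OF c2_const c2_comp[where \<phi>=arctan and \<phi>'="\<lambda>y. inverse (1 + y^2)"
          and \<phi>''="\<lambda>y. - (2 * y * inverse ((1 + y^2) ^ 2))" and T=UNIV, OF cG]]])
       (auto intro: at_d1 at_d2 at_c2)
  have cD: "C2_on (\<lambda>p. 1 + fmmob * snd p * (1/2 + 1/pi * arctan (epdry * (Swc + fst p * (1 - Swc - Sgr) - fmdry)))) unit_square"
    by (rule c2_add[OF c2_const c2_mult[OF c2_mult[OF c2_const c2_snd] cF]])
  have rD: "(\<lambda>p. 1 + fmmob * snd p * (1/2 + 1/pi * arctan (epdry * (Swc + fst p * (1 - Swc - Sgr) - fmdry)))) ` unit_square \<subseteq> {y. y \<noteq> 0}"
  proof (rule image_subsetI)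
    fix p assume "p \<in> unit_square"
    then have "snd p \<ge> 0" using mem by auto
    from denpos[OF this, of "epdry * (Swc + fst p * (1 - Swc - Sgr) - fmdry)"] show "1 + fmmob * snd p * (1/2 + 1/pi * arctan (epdry * (Swc + fst p * (1 - Swc - Sgr) - fmdry))) \<in> {y. y \<noteq> 0}" by auto
  qed
  have cE: "C2_on (\<lambda>p. krw0 * fst p powr nw + muw / mug *
     (krg0 * (1 - fst p) powr ng / (1 + fmmob * snd p * (1/2 + 1/pi * arctan (epdry * (Swc + fst p * (1 - Swc - Sgr) - fmdry)))))) unit_square"
    by (rule c2_add[OF cA c2_mult[OF c2_const c2_div[OF cB cD rD]]])
  have rE: "(\<lambda>p. krw0 * fst p powr nw + muw / mug *
     (krg0 * (1 - fst p) powr ng / (1 + fmmob * snd p * (1/2 + 1/pi * arctan (epdry * (Swc + fst p * (1 - Swc - Sgr) - fmdry)))))) ` unit_square \<subseteq> {y. y \<noteq> 0}"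
  proof (rule image_subsetI)
    fix p assume "p \<in> unit_square"
    then have "0 \<le> fst p" "fst p \<le> 1" "snd p \<ge> 0" using mem by auto
    from Epos[OF this, of "epdry * (Swc + fst p * (1 - Swc - Sgr) - fmdry)"] show "krw0 * fst p powr nw + muw / mug *
     (krg0 * (1 - fst p) powr ng / (1 + fmmob * snd p * (1/2 + 1/pi * arctan (epdry * (Swc + fst p * (1 - Swc - Sgr) - fmdry))))) \<in> {y. y \<noteq> 0}" by auto
  qed
  have cf: "C2_on f unit_square"
    unfolding feq
    by (rule c2_div[OF cA cE rE])

  have vals: "\<forall>C\<in>{0..1}. f (0, C) = 0 \<and> f (1, C) = 1"
    using kp by (simp add: feq)
  have oneD: "((\<lambda>S. f (S, C)) has_real_derivative 0) (at 0 within {0..1})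
    \<and> ((\<lambda>S. f (S, C)) has_real_derivative 0) (at 1 within {0..1})
    \<and> (\<forall>S\<in>{0<..<1}. \<exists>d>0. ((\<lambda>s. f (s, C)) has_real_derivative d) (at S))"
    if C: "C \<in> {0..1}" for C
  proof -
    define M where "M = muw / mug"
    define a where "a = (\<lambda>s::real. krw0 * s powr nw)"
    define b where "b = (\<lambda>s::real. krg0 * (1 - s) powr ng)"
    define d where "d = (\<lambda>s. 1 + fmmob * C * (1/2 + 1/pi * arctan (epdry * (Swc + s * (1 - Swc - Sgr) - fmdry))))"
    have fe: "(\<lambda>s. f (s, C)) = (\<lambda>s. a s / (a s + M * (b s / d s)))"
      by (rule ext) (simp only: feq a_def b_def d_def M_def fst_conv snd_conv)
    have C0: "C \<ge> 0" using C by simp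
    have DD: "\<exists>dd\<ge>0. (d has_real_derivative dd) (at s within {0..1})" for s
    proof -
      have inner: "((\<lambda>s. epdry * (Swc + s * (1 - Swc - Sgr) - fmdry)) has_real_derivative epdry * (1 - Swc - Sgr)) (at s within {0..1})"
        by (auto intro!: derivative_eq_intros)
      note h = DERIV_add[OF DERIV_const DERIV_cmult[OF DERIV_add[OF DERIV_const DERIV_cmult[OF DERIV_chain2[OF DERIV_arctan inner]]]], of 1 "fmmob * C" "1/2" "1/pi"]
      have nn: "0 + fmmob * C * (0 + 1 / pi * (inverse (1 + (epdry * (Swc + s * (1 - Swc - Sgr) - fmdry))\<^sup>2) * (epdry * (1 - Swc - Sgr)))) \<ge> 0"
        using kp C0 by (auto intro!: mult_nonneg_nonneg)
      show ?thesis unfolding d_def using h nn by blast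
    qed
    have Q: "\<exists>dd\<ge>0. ((\<lambda>s. f (s, C)) has_real_derivative
        (krw0 * (nw * s powr (nw-1)) * (a s + M * (b s / d s)) - a s * (krw0 * (nw * s powr (nw-1)) + M * ((krg0 * - (ng * (1 - s) powr (ng-1)) * d s - b s * dd) / (d s * d s))))
         / ((a s + M * (b s / d s)) * (a s + M * (b s / d s)))) (at s within {0..1})"
      if s: "s \<in> {0..1}" for s
    proof -
      obtain dd where dd: "dd \<ge> 0" "(d has_real_derivative dd) (at s within {0..1})" using DD by blast
      have da: "(a has_real_derivative krw0 * (nw * s powr (nw-1))) (at s within {0..1})"
        unfolding a_def by (rule DERIV_cmult[OF dpow1]) (use kp s in auto)
      have db: "(b has_real_derivative krg0 * - (ng * (1 - s) powr (ng-1))) (at s within {0..1})"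
        unfolding b_def by (rule DERIV_cmult[OF dflip1]) (use kp s in auto)
      have dnz: "d s \<noteq> 0" unfolding d_def using denpos[OF C0] by (simp add: less_imp_neq[THEN not_sym])
      have Enz: "a s + M * (b s / d s) \<noteq> 0" unfolding a_def b_def d_def M_def
        using Epos[of s C "epdry * (Swc + s * (1 - Swc - Sgr) - fmdry)"] s C0 by auto
      show ?thesis using dd(1) quot_deriv[OF da db dd(2) dnz Enz] unfolding fe by blast
    qed
    have z0: "((\<lambda>S. f (S, C)) has_real_derivative 0) (at 0 within {0..1})"
    proof -
      obtain dd where "dd \<ge> 0" and h: "((\<lambda>s. f (s, C)) has_real_derivative
        (krw0 * (nw * 0 powr (nw-1)) * (a 0 + M * (b 0 / d 0)) - a 0 * (krw0 * (nw * 0 powr (nw-1)) + M * ((krg0 * - (ng * (1 - 0) powr (ng-1)) * d 0 - b 0 * dd) / (d 0 * d 0))))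
         / ((a 0 + M * (b 0 / d 0)) * (a 0 + M * (b 0 / d 0)))) (at 0 within {0..1})"
        using Q[of 0] by auto
      show ?thesis using h by (rule DERIV_cong) (simp add: a_def)
    qed
    have z1: "((\<lambda>S. f (S, C)) has_real_derivative 0) (at 1 within {0..1})"
    proof -
      obtain dd where "dd \<ge> 0" and h: "((\<lambda>s. f (s, C)) has_real_derivative
        (krw0 * (nw * 1 powr (nw-1)) * (a 1 + M * (b 1 / d 1)) - a 1 * (krw0 * (nw * 1 powr (nw-1)) + M * ((krg0 * - (ng * (1 - 1) powr (ng-1)) * d 1 - b 1 * dd) / (d 1 * d 1))))
         / ((a 1 + M * (b 1 / d 1)) * (a 1 + M * (b 1 / d 1)))) (at 1 within {0..1})"
        using Q[of 1] by auto
      show ?thesis using h by (rule DERIV_cong) (simp add: b_def)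
    qed
    have pos: "\<exists>d>0. ((\<lambda>s. f (s, C)) has_real_derivative d) (at S)" if S: "S \<in> {0<..<1}" for S
    proof -
      have S01: "S \<in> {0..1}" using S by auto
      obtain dd where dd: "dd \<ge> 0" and h: "((\<lambda>s. f (s, C)) has_real_derivative
        (krw0 * (nw * S powr (nw-1)) * (a S + M * (b S / d S)) - a S * (krw0 * (nw * S powr (nw-1)) + M * ((krg0 * - (ng * (1 - S) powr (ng-1)) * d S - b S * dd) / (d S * d S))))
         / ((a S + M * (b S / d S)) * (a S + M * (b S / d S)))) (at S within {0..1})"
        using Q[OF S01] by auto
      have k: "(krw0 * (nw * S powr (nw-1)) * (a S + M * (b S / d S)) - a S * (krw0 * (nw * S powr (nw-1)) + M * ((krg0 * - (ng * (1 - S) powr (ng-1)) * d S - b S * dd) / (d S * d S))))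
         / ((a S + M * (b S / d S)) * (a S + M * (b S / d S))) > 0"
      proof (rule key1)
        show "a S \<ge> 0" unfolding a_def using kp by simp
        show "krw0 * (nw * S powr (nw-1)) > 0" using kp S by auto
        show "b S > 0" unfolding b_def using kp S by auto
        show "krg0 * - (ng * (1 - S) powr (ng-1)) \<le> 0" using kp S by auto
        show "d S > 0" unfolding d_def using denpos[OF C0] by simp
        show "dd \<ge> 0" by (rule dd)
        show "M > 0" unfolding M_def using M0 .
      qed
      have "at S within {0..1} = at S" by (rule at_within_interior) (use S in simp)
      with h k show ?thesis by auto
    qed
    show ?thesis using z0 z1 pos by blast
  qed
  have posC: "\<exists>d>0. ((\<lambda>c. f (S, c)) has_real_derivative d) (at C within {0..1})"
    if S: "S \<in> {0<..<1}" and C: "C \<in> {0..1}" for S C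
  proof -
    define M where "M = muw / mug"
    define A0 where "A0 = krw0 * S powr nw"
    define B0 where "B0 = krg0 * (1 - S) powr ng"
    define F0 where "F0 = 1/2 + 1/pi * arctan (epdry * (Swc + S * (1 - Swc - Sgr) - fmdry))"
    have fe: "(\<lambda>c. f (S, c)) = (\<lambda>c. A0 / (A0 + M * (B0 / (1 + fmmob * c * F0))))"
      by (rule ext) (simp only: feq A0_def B0_def F0_def M_def fst_conv snd_conv)
    have C0: "C \<ge> 0" using C by simp
    have F0p: "F0 > 0" unfolding F0_def by (rule F_pos)
    have dc: "((\<lambda>c. 1 + fmmob * c * F0) has_real_derivative fmmob * F0) (at C within {0..1})"
      by (auto intro!: derivative_eq_intros)
    have dcp: "1 + fmmob * C * F0 > 0" unfolding F0_def using denpos[OF C0] by simp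
    have A0p: "A0 > 0" unfolding A0_def using kp S by auto
    have B0p: "B0 > 0" unfolding B0_def using kp S by auto
    have Enz: "A0 + M * (B0 / (1 + fmmob * C * F0)) \<noteq> 0"
    proof -
      have "M * (B0 / (1 + fmmob * C * F0)) > 0" unfolding M_def by (rule mult_pos_pos[OF M0 divide_pos_pos[OF B0p dcp]])
      then show ?thesis using A0p by linarith
    qed
    note h = quot_deriv[where a="\<lambda>c. A0" and b="\<lambda>c. B0" and d="\<lambda>c. 1 + fmmob * c * F0" and M=M,
      OF DERIV_const DERIV_const dc less_imp_neq[OF dcp, THEN not_sym] Enz]
    have k: "(0 * (A0 + M * (B0 / (1 + fmmob * C * F0))) - A0 * (0 + M * ((0 * (1 + fmmob * C * F0) - B0 * (fmmob * F0)) / ((1 + fmmob * C * F0) * (1 + fmmob * C * F0)))))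
       / ((A0 + M * (B0 / (1 + fmmob * C * F0))) * (A0 + M * (B0 / (1 + fmmob * C * F0)))) > 0"
      by (rule key2[OF A0p B0p dcp]) (use kp F0p M0 in \<open>auto simp: M_def\<close>)
    show ?thesis unfolding fe using h k by blast
  qed
  show ?thesis using cf vals oneD posC by blast
qed

end
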